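(* Let $\xi\in C^2(\mathbb S^1;\mathbb R^d)$ and $\sigma\in C^1(\mathbb S^1;\mathbb R)$ satisfy $\partial_s(\sigma\partial_s\xi)+\xi=0$ and $|\partial_s\xi|=1$ on $\mathbb S^1$. Let $\tau:=\sigma^2$ and $\bar\tau:=\int_0^1\tau^{1/2}\,ds$. Then $\tau$ satisfies the first integral $$\tfrac12(\partial_s\tau)^2+V(\tau)=\lambda,\qquad V(\tau):=4\tau^{3/2}-6\bar\tau\,\tau,$$ where $\lambda=V(\tau_e)$ for any extreme value $\tau_e$ of $\tau$. Moreover $\lambda\in[-2\bar\tau^3,0)$.
   Context: $\mathbb S^1=\mathbb R/\mathbb Z$, $d\ge2$. *)

theory Defs
  imports "HOL-Analysis.Analysis"
begin

text \<open>S^1 = R/Z: functions on S^1 are represented as 1-periodic functions on the reals.\<close>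

definition periodic1 :: "(real \<Rightarrow> 'a) \<Rightarrow> bool" where
  "periodic1 f \<longleftrightarrow> (\<forall>s. f (s + 1) = f s)"

definition Vpot :: "real \<Rightarrow> real \<Rightarrow> real" where
  "Vpot taubar t = 4 * t powr (3/2) - 6 * taubar * t"

end

theory Submission
  imports Defs
begin

lemma inner_deriv:
  fixes f g :: "real \<Rightarrow> 'a::real_inner"
  assumes "(f has_vector_derivative f') (at x)" "(g has_vector_derivative g') (at x)"
  shows "((\<lambda>x. f x \<bullet> g x) has_real_derivative (f x \<bullet> g' + f' \<bullet> g x)) (at x)"
  using bounded_bilinear.has_vector_derivative[OF bounded_bilinear_inner assms]
  by (simp add: has_real_derivative_iff_has_vector_derivative)

lemma powr32: "(x::real) > 0 \<Longrightarrow> (x^2) powr (3/2) = x^3"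
proof -
  assume x: "x > 0"
  have "(x^2) powr (3/2) = (x powr 2) powr (3/2)" using x by (simp add: powr_realpow)
  also have "\<dots> = x powr 3" by (simp add: powr_powr)
  also have "\<dots> = x^3" using x by (simp add: powr_realpow)
  finally show ?thesis .
qed

lemma per_deriv:
  fixes f :: "real \<Rightarrow> 'a::real_normed_vector"
  assumes per: "\<And>s. f (s + 1) = f s" and d: "\<And>s. (f has_vector_derivative f' s) (at s)"
  shows "f' (s + 1) = f' s"
proof -
  have a: "((\<lambda>t. t + 1) has_vector_derivative 1) (at s)"
    by (auto intro!: derivative_eq_intros)
  have "((f \<circ> (\<lambda>t. t + 1)) has_vector_derivative (1 *\<^sub>R f' (s + 1))) (at s)"
    by (rule vector_diff_chain_at[OF a]) (simp add: d)
  moreover have "f \<circ> (\<lambda>t. t + 1) = f" using per by (auto simp: o_def)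
  ultimately have "(f has_vector_derivative f' (s + 1)) (at s)" by simp
  then show ?thesis using d vector_derivative_unique_at by blast
qed

theorem proposition3p9:
  fixes \<xi> \<xi>' \<xi>'' :: "real \<Rightarrow> real ^ 'd"
    and \<sigma> \<sigma>' :: "real \<Rightarrow> real"
  assumes d2: "CARD('d) \<ge> 2"
    and per_xi: "periodic1 \<xi>"
    and per_sigma: "periodic1 \<sigma>"
    and xi_d1: "\<And>s. (\<xi> has_vector_derivative \<xi>' s) (at s)"
    and xi_d2: "\<And>s. (\<xi>' has_vector_derivative \<xi>'' s) (at s)"
    and xi_C2: "continuous_on UNIV \<xi>''"
    and sigma_d1: "\<And>s. (\<sigma> has_real_derivative \<sigma>' s) (at s)"
    and sigma_C1: "continuous_on UNIV \<sigma>'"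
    and eq: "\<And>s. ((\<lambda>t. \<sigma> t *\<^sub>R \<xi>' t) has_vector_derivative (- \<xi> s)) (at s)"
    and unit: "\<And>s. norm (\<xi>' s) = 1"
  shows "let \<tau> = (\<lambda>s. (\<sigma> s)\<^sup>2);
             taubar = integral {0..1} (\<lambda>s. sqrt (\<tau> s))
         in \<exists>lam::real.
              (\<forall>s. (1/2) * (deriv \<tau> s)\<^sup>2 + Vpot taubar (\<tau> s) = lam)
            \<and> (\<forall>s0. ((\<forall>s. \<tau> s \<le> \<tau> s0) \<or> (\<forall>s. \<tau> s0 \<le> \<tau> s))
                     \<longrightarrow> lam = Vpot taubar (\<tau> s0))
            \<and> - 2 * taubar ^ 3 \<le> lam \<and> lam < 0"
proof -
  have n1: "\<And>s. \<xi>' s \<bullet> \<xi>' s = 1" using unit by (simp add: norm_eq_1)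
  have F1: "\<xi>' s \<bullet> \<xi>'' s = 0" for s
  proof -
    have "((\<lambda>t. \<xi>' t \<bullet> \<xi>' t) has_real_derivative (\<xi>' s \<bullet> \<xi>'' s + \<xi>'' s \<bullet> \<xi>' s)) (at s)"
      by (rule inner_deriv[OF xi_d2 xi_d2])
    moreover have "(\<lambda>t. \<xi>' t \<bullet> \<xi>' t) = (\<lambda>t. 1)" using n1 by simp
    ultimately have "((\<lambda>t. 1::real) has_real_derivative (\<xi>' s \<bullet> \<xi>'' s + \<xi>'' s \<bullet> \<xi>' s)) (at s)" by simp
    then have "\<xi>' s \<bullet> \<xi>'' s + \<xi>'' s \<bullet> \<xi>' s = 0" using DERIV_const DERIV_unique by blast
    then show ?thesis by (simp add: inner_commute)
  qed
  have V: "\<sigma>' s *\<^sub>R \<xi>' s + \<sigma> s *\<^sub>R \<xi>'' s = - \<xi> s" for s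
  proof -
    have "((\<lambda>t. \<sigma> t *\<^sub>R \<xi>' t) has_vector_derivative (\<sigma> s *\<^sub>R \<xi>'' s + \<sigma>' s *\<^sub>R \<xi>' s)) (at s)"
      by (rule has_vector_derivative_scaleR[OF sigma_d1 xi_d2])
    then show ?thesis using eq vector_derivative_unique_at by (metis add.commute)
  qed
  have S1: "\<sigma>' s = - (\<xi> s \<bullet> \<xi>' s)" for s
  proof -
    have "(\<sigma>' s *\<^sub>R \<xi>' s + \<sigma> s *\<^sub>R \<xi>'' s) \<bullet> \<xi>' s = - \<xi> s \<bullet> \<xi>' s" using V by simp
    then show ?thesis using n1[of s] F1[of s] by (simp add: inner_add_left inner_add_right inner_commute)
  qed
  have S2: "\<sigma> s * (\<xi>'' s \<bullet> \<xi>'' s) = - (\<xi> s \<bullet> \<xi>'' s)" for s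
  proof -
    have "(\<sigma>' s *\<^sub>R \<xi>' s + \<sigma> s *\<^sub>R \<xi>'' s) \<bullet> \<xi>'' s = - \<xi> s \<bullet> \<xi>'' s" using V by simp
    then show ?thesis using F1[of s] by (simp add: inner_add_left inner_add_right inner_commute)
  qed
  define c where "c = \<xi> 0 \<bullet> \<xi> 0 + 2 * \<sigma> 0"
  have C: "\<xi> s \<bullet> \<xi> s + 2 * \<sigma> s = c" for s
  proof -
    have "\<forall>s. ((\<lambda>t. \<xi> t \<bullet> \<xi> t + 2 * \<sigma> t) has_real_derivative 0) (at s)"
    proof
      fix s
      have "((\<lambda>t. \<xi> t \<bullet> \<xi> t + 2 * \<sigma> t) has_real_derivative
              ((\<xi> s \<bullet> \<xi>' s + \<xi>' s \<bullet> \<xi> s) + 2 * \<sigma>' s)) (at s)"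
        by (intro DERIV_add inner_deriv xi_d1 DERIV_cmult sigma_d1)
      moreover have "(\<xi> s \<bullet> \<xi>' s + \<xi>' s \<bullet> \<xi> s) + 2 * \<sigma>' s = 0"
        using S1[of s] by (simp add: inner_commute)
      ultimately show "((\<lambda>t. \<xi> t \<bullet> \<xi> t + 2 * \<sigma> t) has_real_derivative 0) (at s)" by simp
    qed
    from DERIV_isconst_all[OF this] show ?thesis unfolding c_def by blast
  qed
  define q where "q s = \<xi>'' s \<bullet> \<xi>'' s" for s
  have q0: "q s \<ge> 0" for s unfolding q_def by simp
  have D2: "(\<sigma>' has_real_derivative (-1 + \<sigma> s * q s)) (at s)" for s
  proof -
    have e: "\<sigma>' = (\<lambda>t. - (\<xi> t \<bullet> \<xi>' t))" using S1 by auto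
    have "((\<lambda>t. - (\<xi> t \<bullet> \<xi>' t)) has_real_derivative - (\<xi> s \<bullet> \<xi>'' s + \<xi>' s \<bullet> \<xi>' s)) (at s)"
      by (intro DERIV_minus inner_deriv xi_d1 xi_d2)
    moreover have "- (\<xi> s \<bullet> \<xi>'' s + \<xi>' s \<bullet> \<xi>' s) = -1 + \<sigma> s * q s"
      using n1[of s] S2[of s] unfolding q_def by simp
    ultimately show ?thesis using e by simp
  qed
  have N: "(\<sigma> s)^2 * q s = c - 2 * \<sigma> s - (\<sigma>' s)^2" for s
  proof -
    have a: "\<sigma> s *\<^sub>R \<xi>'' s = - \<xi> s - \<sigma>' s *\<^sub>R \<xi>' s" using V[of s] by (simp add: algebra_simps)
    have "(\<sigma> s)^2 * q s = (\<sigma> s *\<^sub>R \<xi>'' s) \<bullet> (\<sigma> s *\<^sub>R \<xi>'' s)"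
      unfolding q_def by (simp add: power2_eq_square)
    also have "\<dots> = (- \<xi> s - \<sigma>' s *\<^sub>R \<xi>' s) \<bullet> (- \<xi> s - \<sigma>' s *\<^sub>R \<xi>' s)" using a by simp
    also have "\<dots> = \<xi> s \<bullet> \<xi> s + 2 * \<sigma>' s * (\<xi> s \<bullet> \<xi>' s) + (\<sigma>' s)^2 * (\<xi>' s \<bullet> \<xi>' s)"
      by (simp add: inner_diff_left inner_diff_right inner_commute power2_eq_square algebra_simps)
    also have "\<dots> = c - 2 * \<sigma> s - (\<sigma>' s)^2"
      using C[of s] S1[of s] n1[of s] by (simp add: power2_eq_square algebra_simps)
    finally show ?thesis .
  qed
  define E where "E s = 2 * (\<sigma> s)^2 * (\<sigma>' s)^2 + 4 * (\<sigma> s)^3 - 2 * c * (\<sigma> s)^2" for s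
  have Ed: "(E has_real_derivative 0) (at s)" for s
  proof -
    have "(E has_real_derivative
       (2 * (2 * \<sigma> s * \<sigma>' s) * (\<sigma>' s)^2 + 2 * (\<sigma> s)^2 * (2 * \<sigma>' s * (-1 + \<sigma> s * q s))
        + 4 * (3 * (\<sigma> s)^2 * \<sigma>' s) - 2 * c * (2 * \<sigma> s * \<sigma>' s))) (at s)"
      unfolding E_def[abs_def]
      by (auto intro!: derivative_eq_intros sigma_d1 D2 simp: power2_eq_square algebra_simps)
    moreover have "2 * (2 * \<sigma> s * \<sigma>' s) * (\<sigma>' s)^2 + 2 * (\<sigma> s)^2 * (2 * \<sigma>' s * (-1 + \<sigma> s * q s))
        + 4 * (3 * (\<sigma> s)^2 * \<sigma>' s) - 2 * c * (2 * \<sigma> s * \<sigma>' s) = 0"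
    proof -
      have "2 * (\<sigma> s)^2 * (2 * \<sigma>' s * (-1 + \<sigma> s * q s)) =
            -4 * (\<sigma> s)^2 * \<sigma>' s + 4 * \<sigma> s * \<sigma>' s * ((\<sigma> s)^2 * q s)"
        by (simp add: power2_eq_square algebra_simps)
      then show ?thesis unfolding N by (simp add: power2_eq_square power3_eq_cube algebra_simps)
    qed
    ultimately show ?thesis by simp
  qed
  define lam where "lam = E 0"
  have Econst: "E s = lam" for s unfolding lam_def using DERIV_isconst_all Ed by blast
  have Eq: "E s = -2 * (\<sigma> s)^2 * ((\<sigma> s)^2 * q s)" for s
    unfolding E_def N by (simp add: power2_eq_square power3_eq_cube algebra_simps)
  have per_s: "\<sigma> (s + 1) = \<sigma> s" for s using per_sigma unfolding periodic1_def by simp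
  have per_x: "\<xi> (s + 1) = \<xi> s" for s using per_xi unfolding periodic1_def by simp
  have per_x1: "\<xi>' (s + 1) = \<xi>' s" for s by (rule per_deriv[OF per_x xi_d1])
  have per_s1: "\<sigma>' (s + 1) = \<sigma>' s" for s using S1 per_x per_x1 by simp
  obtain x where "\<sigma>' 1 - \<sigma>' 0 = (1 - 0) * (-1 + \<sigma> x * q x)"
    using MVT2[of 0 1 \<sigma>' "\<lambda>s. -1 + \<sigma> s * q s"] D2 by auto
  then have sq1: "\<sigma> x * q x = 1" using per_s1[of 0] by simp
  have sx: "\<sigma> x > 0"
  proof (rule ccontr)
    assume "\<not> \<sigma> x > 0"
    then have "\<sigma> x * q x \<le> 0" using q0[of x] by (simp add: mult_nonpos_nonneg)
    then show False using sq1 by simp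
  qed
  have qx: "q x > 0" using sq1 sx q0[of x] by (metis less_eq_real_def mult_zero_right zero_neq_one)
  have lamneg: "lam < 0"
  proof -
    have "lam = -2 * (\<sigma> x)^2 * ((\<sigma> x)^2 * q x)" using Econst[of x] Eq[of x] by simp
    moreover have "(\<sigma> x)^2 * ((\<sigma> x)^2 * q x) > 0" using sx qx by simp
    ultimately show ?thesis by linarith
  qed
  have nz: "\<sigma> s \<noteq> 0" for s
  proof
    assume "\<sigma> s = 0"
    then have "E s = 0" unfolding Eq by simp
    then show False using Econst[of s] lamneg by simp
  qed
  have cont: "continuous_on A \<sigma>" for A
    using sigma_d1 DERIV_continuous continuous_at_imp_continuous_on by blast
  have pos: "\<sigma> s > 0" for s
  proof (rule ccontr)
    assume "\<not> \<sigma> s > 0"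
    then have ns: "\<sigma> s < 0" using nz[of s] by simp
    have "\<exists>z. \<sigma> z = 0"
    proof (cases "s \<le> x")
      case True
      then show ?thesis using IVT'[of \<sigma> s 0 x] ns sx cont by force
    next
      case False
      then show ?thesis using IVT2'[of \<sigma> s 0 x] ns sx cont by force
    qed
    then show False using nz by blast
  qed
  have Td: "((\<lambda>s. 2 * \<sigma> s * \<sigma>' s) has_real_derivative (2 * c - 6 * \<sigma> s)) (at s)" for s
  proof -
    have "((\<lambda>s. 2 * \<sigma> s * \<sigma>' s) has_real_derivative
            (2 * \<sigma>' s * \<sigma>' s + 2 * \<sigma> s * (-1 + \<sigma> s * q s))) (at s)"
      by (auto intro!: derivative_eq_intros sigma_d1 D2 simp: algebra_simps)
    moreover have "2 * \<sigma>' s * \<sigma>' s + 2 * \<sigma> s * (-1 + \<sigma> s * q s) = 2 * c - 6 * \<sigma> s"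
    proof -
      have "2 * \<sigma> s * (-1 + \<sigma> s * q s) = - 2 * \<sigma> s + 2 * ((\<sigma> s)^2 * q s)"
        by (simp add: power2_eq_square algebra_simps)
      then show ?thesis unfolding N by (simp add: power2_eq_square algebra_simps)
    qed
    ultimately show ?thesis by simp
  qed
  have I0: "((\<lambda>s. 2 * c - 6 * \<sigma> s) has_integral 0) {0..1}"
  proof -
    have "((\<lambda>s. 2 * c - 6 * \<sigma> s) has_integral
            ((2 * \<sigma> 1 * \<sigma>' 1) - (2 * \<sigma> 0 * \<sigma>' 0))) {0..1}"
      by (rule fundamental_theorem_of_calculus)
         (auto intro: has_field_derivative_at_within Td simp: has_real_derivative_iff_has_vector_derivative[symmetric])
    then show ?thesis using per_s[of 0] per_s1[of 0] by simp
  qed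
  have Is: "(\<sigma> has_integral (c / 3)) {0..1}"
  proof -
    have "((\<lambda>s. 2 * c - (2 * c - 6 * \<sigma> s)) has_integral (2 * c - 0)) {0..1}"
      using has_integral_diff[OF has_integral_const_real[of "2*c" 0 1] I0] by simp
    from has_integral_cmul[OF this, of "1/6"] show ?thesis by simp
  qed
  define a where "a = c / 3"
  have sqrtfun: "(\<lambda>s. sqrt ((\<sigma> s)^2)) = \<sigma>" using pos by (auto simp: less_imp_le)
  have tb: "integral {0..1} (\<lambda>s. sqrt ((\<lambda>s. (\<sigma> s)\<^sup>2) s)) = a"
    unfolding a_def using sqrtfun integral_unique[OF Is] by simp
  have cpos: "c > 0" using C[of 0] pos[of 0] by (metis add_nonneg_pos inner_ge_zero mult_pos_pos zero_less_numeral)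
  have apos: "a > 0" unfolding a_def using cpos by simp
  have tauD: "((\<lambda>s. (\<sigma> s)\<^sup>2) has_real_derivative (2 * \<sigma> s * \<sigma>' s)) (at s)" for s
    by (auto intro!: derivative_eq_intros sigma_d1)
  have dtau: "deriv (\<lambda>s. (\<sigma> s)\<^sup>2) s = 2 * \<sigma> s * \<sigma>' s" for s
    using tauD DERIV_imp_deriv by blast
  have Vp: "Vpot a ((\<sigma> s)\<^sup>2) = 4 * (\<sigma> s)^3 - 2 * c * (\<sigma> s)^2" for s
    unfolding Vpot_def a_def using powr32[OF pos[of s]] by simp
  have main: "(1/2) * (deriv (\<lambda>s. (\<sigma> s)\<^sup>2) s)\<^sup>2 + Vpot a ((\<sigma> s)\<^sup>2) = lam" for s
    using Econst[of s] unfolding dtau Vp E_def by (simp add: power2_eq_square algebra_simps)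
  have ext: "lam = Vpot a ((\<sigma> s0)\<^sup>2)"
    if h: "(\<forall>s. (\<sigma> s)\<^sup>2 \<le> (\<sigma> s0)\<^sup>2) \<or> (\<forall>s. (\<sigma> s0)\<^sup>2 \<le> (\<sigma> s)\<^sup>2)" for s0
  proof -
    have "2 * \<sigma> s0 * \<sigma>' s0 = 0"
      using h
    proof
      assume "\<forall>s. (\<sigma> s)\<^sup>2 \<le> (\<sigma> s0)\<^sup>2"
      then show ?thesis using DERIV_local_max[OF tauD[of s0], of 1] by simp
    next
      assume "\<forall>s. (\<sigma> s0)\<^sup>2 \<le> (\<sigma> s)\<^sup>2"
      then show ?thesis using DERIV_local_min[OF tauD[of s0], of 1] by simp
    qed
    then show ?thesis using main[of s0] unfolding dtau by (metis power_zero_numeral mult_zero_right add_0)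
  qed
  have lb: "- 2 * a ^ 3 \<le> lam"
  proof -
    let ?y = "\<sigma> 0"
    have "Vpot a ((\<sigma> 0)\<^sup>2) \<le> lam" using main[of 0] zero_le_power2[of "deriv (\<lambda>s. (\<sigma> s)\<^sup>2) 0"] by linarith
    moreover have "Vpot a ((\<sigma> 0)\<^sup>2) = 4 * ?y^3 - 6 * a * ?y^2" using Vp[of 0] unfolding a_def by simp
    moreover have "4 * ?y^3 - 6 * a * ?y^2 + 2 * a^3 = 2 * (?y - a)^2 * (2 * ?y + a)"
      by (simp add: power2_eq_square power3_eq_cube algebra_simps)
    moreover have "2 * (?y - a)^2 * (2 * ?y + a) \<ge> 0" using pos[of 0] apos by simp
    ultimately show ?thesis by linarith
  qed
  show ?thesis unfolding Let_def tb
    using main ext lb lamneg by blast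
qed

end
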